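(* Consider a combinatorial auction on a finite item set $X$ using the VCG rules. Let $u_1,\dots,u_k$ be the (reported) valuations of the other bidders and let $u=u_1\vee\dots\vee u_k$ be their combined valuation; suppose $u$ is submodular. Let a player have true valuation $v$. Suppose that instead of bidding under a single identity the player places bids under two identities with valuations $v_1$ and $v_2$, receiving bundles $S_1,S_2$ and paying VCG payments $p_1,p_2$ in that auction. Then $v(S_1\cup S_2)-p_1-p_2$ is at most the utility the player obtains by bidding truthfully $v$ under a single identity; that is, the player cannot benefit from placing false-name bids.
   Context: A valuation on $X$ is a function $w:2^X\to\mathbb{R}_{\ge 0}$ with $w(\emptyset)=0$ and monotone under inclusion. For valuations $w_1,w_2$, $(w_1\vee w_2)(S)=\max_{T\subseteq S}(w_1(T)+w_2(S\setminus T))$; this is associative, and $w_1\vee\dots\vee w_k(S)$ is the maximum of $\sum_i w_i(T_i)$ over partitions of $S$ into $T_1,\dots,T_k$. A valuation $w$ is submodular if $w(A)+w(B)\ge w(A\cup B)+w(A\cap B)$ for all $A,B\subseteq X$. VCG rules: given reported valuations of all bidders, the items are allocated by an allocation (partition of $X$) maximizing the sum of reported valuations; a bidder $i$ receiving $S_i$ pays $\max\sum_{j\ne i}w_j(T_j)-\sum_{j\ne i}w_j(S_j)$, where the max is over allocations of $X$ among the bidders other than $i$ (equivalently, with an optimal allocation, $W_{-i}(X)-W_{-i}(X\setminus S_i)$ where $W_{-i}$ is the OR of the other bidders' valuations). A bidder's utility is his true value of the items received minus the payments made. *)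

theory Defs
  imports Complex_Main
begin

type_synonym 'a valuation = "'a set \<Rightarrow> real"

definition valuation :: "'a set \<Rightarrow> 'a valuation \<Rightarrow> bool" where
  "valuation X w \<longleftrightarrow> w {} = 0 \<and> (\<forall>S. S \<subseteq> X \<longrightarrow> 0 \<le> w S)
     \<and> (\<forall>S T. S \<subseteq> T \<longrightarrow> T \<subseteq> X \<longrightarrow> w S \<le> w T)"

definition submodular :: "'a set \<Rightarrow> 'a valuation \<Rightarrow> bool" where
  "submodular X w \<longleftrightarrow> (\<forall>A B. A \<subseteq> X \<longrightarrow> B \<subseteq> X \<longrightarrow>
     w (A \<union> B) + w (A \<inter> B) \<le> w A + w B)"

definition vee :: "'a valuation \<Rightarrow> 'a valuation \<Rightarrow> 'a valuation" where
  "vee w1 w2 S = Max ((\<lambda>T. w1 T + w2 (S - T)) ` Pow S)"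

definition OR_list :: "'a valuation list \<Rightarrow> 'a valuation" where
  "OR_list ws = foldr vee ws (\<lambda>_. 0)"

definition is_alloc :: "'a set \<Rightarrow> 'b set \<Rightarrow> ('b \<Rightarrow> 'a set) \<Rightarrow> bool" where
  "is_alloc S J A \<longleftrightarrow> (\<forall>i\<in>J. A i \<subseteq> S) \<and> (\<forall>i\<in>J. \<forall>j\<in>J. i \<noteq> j \<longrightarrow> A i \<inter> A j = {})
     \<and> (\<Union>i\<in>J. A i) = S"

definition welfare :: "('b \<Rightarrow> 'a valuation) \<Rightarrow> 'b set \<Rightarrow> ('b \<Rightarrow> 'a set) \<Rightarrow> real" where
  "welfare w J A = (\<Sum>i\<in>J. w i (A i))"

definition opt_welfare :: "'a set \<Rightarrow> 'b set \<Rightarrow> ('b \<Rightarrow> 'a valuation) \<Rightarrow> real" where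
  "opt_welfare S J w = Max {welfare w J A | A. is_alloc S J A}"

definition optimal_alloc :: "'a set \<Rightarrow> 'b set \<Rightarrow> ('b \<Rightarrow> 'a valuation) \<Rightarrow> ('b \<Rightarrow> 'a set) \<Rightarrow> bool" where
  "optimal_alloc X J w A \<longleftrightarrow> is_alloc X J A \<and>
     (\<forall>B. is_alloc X J B \<longrightarrow> welfare w J B \<le> welfare w J A)"

definition vcg_payment :: "'a set \<Rightarrow> 'b set \<Rightarrow> ('b \<Rightarrow> 'a valuation) \<Rightarrow> ('b \<Rightarrow> 'a set) \<Rightarrow> 'b \<Rightarrow> real" where
  "vcg_payment X J w A i = opt_welfare X (J - {i}) w - welfare w (J - {i}) A"

end

theory Submission
  imports Defs "HOL-Library.FuncSet"
begin

lemma upt_split: "[m..<m+Suc k] = m # [Suc m..<Suc m+k]"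
  by (simp add: upt_conv_Cons)

lemma ivl_split: "{m..<m+Suc k} = insert m {Suc m..<Suc m+k}" by auto

lemma sum_split: "(\<Sum>i\<in>{m..<m+Suc k}. g i) = g m + (\<Sum>i\<in>{Suc m..<Suc m+k}. g i)"
  unfolding ivl_split by (rule sum.insert) auto

lemma lemA:
  fixes f :: "nat \<Rightarrow> 'a set \<Rightarrow> real"
  shows "\<forall>m B S. finite S \<longrightarrow> is_alloc S {m..<m+k} B \<longrightarrow>
     (\<Sum>i\<in>{m..<m+k}. f i (B i)) \<le> OR_list (map f [m..<m+k]) S"
proof (induction k)
  case 0
  then show ?case by (simp add: is_alloc_def OR_list_def)
next
  case (Suc k)
  show ?case
  proof (intro allI impI)
    fix m and B :: "nat \<Rightarrow> 'a set" and S :: "'a set" assume fS: "finite S" and al: "is_alloc S {m..<m+Suc k} B"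
    have Bm: "B m \<subseteq> S" using al by (auto simp: is_alloc_def)
    have al2: "is_alloc (S - B m) {Suc m..<Suc m+k} B"
      unfolding is_alloc_def
    proof (intro conjI)
      have sub: "{Suc m..<Suc m+k} \<subseteq> {m..<m+Suc k}" by auto
      have mi: "m \<in> {m..<m+Suc k}" by simp
      have q1: "\<forall>i\<in>{m..<m+Suc k}. B i \<subseteq> S" and
        q2: "\<forall>i\<in>{m..<m+Suc k}. \<forall>j\<in>{m..<m+Suc k}. i \<noteq> j \<longrightarrow> B i \<inter> B j = {}" and
        q3: "(\<Union>i\<in>{m..<m+Suc k}. B i) = S"
        using al unfolding is_alloc_def by blast+
      have d: "B i \<inter> B m = {}" if i: "i \<in> {Suc m..<Suc m+k}" for i
      proof -
        have "i \<in> {m..<m+Suc k}" "i \<noteq> m" using i by auto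
        then show ?thesis using q2 mi by blast
      qed
      show "\<forall>i\<in>{Suc m..<Suc m+k}. B i \<subseteq> S - B m"
        using q1 d sub by blast
      show "\<forall>i\<in>{Suc m..<Suc m+k}. \<forall>j\<in>{Suc m..<Suc m+k}. i \<noteq> j \<longrightarrow> B i \<inter> B j = {}"
        using q2 sub by blast
      have e: "{m..<m+Suc k} = insert m {Suc m..<Suc m+k}" by auto
      have "S = B m \<union> (\<Union>i\<in>{Suc m..<Suc m+k}. B i)"
        using q3 unfolding e by auto
      then show "(\<Union>i\<in>{Suc m..<Suc m+k}. B i) = S - B m" using d by blast
    qed
    have ih: "(\<Sum>i\<in>{Suc m..<Suc m+k}. f i (B i)) \<le> OR_list (map f [Suc m..<Suc m+k]) (S - B m)"
      using Suc.IH[rule_format, OF _ al2] fS by simp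
    have "OR_list (map f [m..<m+Suc k]) S = vee (f m) (OR_list (map f [Suc m..<Suc m+k])) S"
      unfolding upt_split OR_list_def by simp
    also have "\<dots> \<ge> f m (B m) + OR_list (map f [Suc m..<Suc m+k]) (S - B m)"
      unfolding vee_def using fS Bm by (intro Max_ge) auto
    finally show "(\<Sum>i\<in>{m..<m+Suc k}. f i (B i)) \<le> OR_list (map f [m..<m+Suc k]) S"
      using ih unfolding sum_split by linarith
  qed
qed

lemma lemB:
  fixes f :: "nat \<Rightarrow> 'a set \<Rightarrow> real"
  shows "\<forall>m S. finite S \<longrightarrow> (\<exists>B. (\<forall>i\<in>{m..<m+k}. B i \<subseteq> S) \<and>
     (\<forall>i\<in>{m..<m+k}. \<forall>j\<in>{m..<m+k}. i \<noteq> j \<longrightarrow> B i \<inter> B j = {}) \<and>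
     (\<Sum>i\<in>{m..<m+k}. f i (B i)) = OR_list (map f [m..<m+k]) S)"
proof (induction k)
  case 0
  then show ?case by (simp add: OR_list_def)
next
  case (Suc k)
  show ?case
  proof (intro allI impI)
    fix m and S :: "'a set" assume fS: "finite S"
    have "vee (f m) (OR_list (map f [Suc m..<Suc m+k])) S \<in>
       (\<lambda>T. f m T + OR_list (map f [Suc m..<Suc m+k]) (S - T)) ` Pow S"
      unfolding vee_def using fS by (intro Max_in) auto
    then obtain T where T: "T \<subseteq> S" and Teq: "vee (f m) (OR_list (map f [Suc m..<Suc m+k])) S
       = f m T + OR_list (map f [Suc m..<Suc m+k]) (S - T)" by auto
    obtain B where B1: "\<forall>i\<in>{Suc m..<Suc m+k}. B i \<subseteq> S - T"
      and B2: "\<forall>i\<in>{Suc m..<Suc m+k}. \<forall>j\<in>{Suc m..<Suc m+k}. i \<noteq> j \<longrightarrow> B i \<inter> B j = {}"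
      and B3: "(\<Sum>i\<in>{Suc m..<Suc m+k}. f i (B i)) = OR_list (map f [Suc m..<Suc m+k]) (S - T)"
      using Suc.IH fS by (meson finite_Diff)
    define B' where "B' = B(m := T)"
    have s: "(\<Sum>i\<in>{Suc m..<Suc m+k}. f i (B' i)) = (\<Sum>i\<in>{Suc m..<Suc m+k}. f i (B i))"
      unfolding B'_def by (intro sum.cong) auto
    have orq: "OR_list (map f [m..<m+Suc k]) S = vee (f m) (OR_list (map f [Suc m..<Suc m+k])) S"
      unfolding upt_split OR_list_def by simp
    have Bm: "B' m = T" unfolding B'_def by simp
    have ss: "(\<Sum>i\<in>{m..<m+Suc k}. f i (B' i)) = f m (B' m) + (\<Sum>i\<in>{Suc m..<Suc m+k}. f i (B' i))"
      by (rule sum_split)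
    show "\<exists>B. (\<forall>i\<in>{m..<m+Suc k}. B i \<subseteq> S) \<and>
     (\<forall>i\<in>{m..<m+Suc k}. \<forall>j\<in>{m..<m+Suc k}. i \<noteq> j \<longrightarrow> B i \<inter> B j = {}) \<and>
     (\<Sum>i\<in>{m..<m+Suc k}. f i (B i)) = OR_list (map f [m..<m+Suc k]) S"
    proof (intro exI[of _ B'] conjI)
      show "\<forall>i\<in>{m..<m+Suc k}. B' i \<subseteq> S"
        using B1 T unfolding B'_def by auto
      show "\<forall>i\<in>{m..<m+Suc k}. \<forall>j\<in>{m..<m+Suc k}. i \<noteq> j \<longrightarrow> B' i \<inter> B' j = {}"
      proof (intro ballI impI)
        fix i j assume i: "i \<in> {m..<m+Suc k}" and j: "j \<in> {m..<m+Suc k}" and ij: "i \<noteq> j"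
        show "B' i \<inter> B' j = {}"
        proof (cases "i = m")
          case True then show ?thesis using j ij B1 unfolding B'_def by auto
        next
          case False
          note F = False
          show ?thesis
          proof (cases "j = m")
            case True then show ?thesis using i F B1 unfolding B'_def by auto
          next
            case False then show ?thesis using i j F ij B2 unfolding B'_def by auto
          qed
        qed
      qed
      show "(\<Sum>i\<in>{m..<m+Suc k}. f i (B' i)) = OR_list (map f [m..<m+Suc k]) S"
        using ss Bm s B3 Teq orq by simp
    qed
  qed
qed

lemma fin_welf: "finite S \<Longrightarrow> finite J \<Longrightarrow> finite {welfare w J A | A. is_alloc S J A}"
proof -
  assume fS: "finite S" and fJ: "finite J"
  have "{welfare w J A | A. is_alloc S J A} \<subseteq> (\<lambda>A. welfare w J A) ` (PiE J (\<lambda>_. Pow S))"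
  proof
    fix x assume "x \<in> {welfare w J A | A. is_alloc S J A}"
    then obtain A where x: "x = welfare w J A" and al: "is_alloc S J A" by auto
    have "restrict A J \<in> PiE J (\<lambda>_. Pow S)" using al by (auto simp: is_alloc_def)
    moreover have "welfare w J (restrict A J) = x" unfolding x welfare_def
      by (intro sum.cong) auto
    ultimately show "x \<in> (\<lambda>A. welfare w J A) ` (PiE J (\<lambda>_. Pow S))" by force
  qed
  then show ?thesis using fS fJ by (meson finite_PiE finite_Pow_iff finite_imageI finite_subset)
qed

lemma opt_ge: "finite S \<Longrightarrow> finite J \<Longrightarrow> is_alloc S J B \<Longrightarrow> welfare w J B \<le> opt_welfare S J w"
  unfolding opt_welfare_def by (intro Max_ge fin_welf) auto

lemma opt_in: "finite S \<Longrightarrow> finite J \<Longrightarrow> is_alloc S J B \<Longrightarrow>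
   \<exists>C. is_alloc S J C \<and> opt_welfare S J w = welfare w J C"
proof -
  assume a: "finite S" "finite J" "is_alloc S J B"
  have "opt_welfare S J w \<in> {welfare w J A | A. is_alloc S J A}"
    unfolding opt_welfare_def using a by (intro Max_in fin_welf) auto
  then show ?thesis by auto
qed

lemma lemC:
  assumes fX: "finite X" and p: "p \<notin> {m..<m+k}" and vp: "valuation X (f p)" and P: "P \<subseteq> X"
  shows "\<exists>D. is_alloc X (insert p {m..<m+k}) D \<and>
     f p P + OR_list (map f [m..<m+k]) (X - P) \<le> welfare f (insert p {m..<m+k}) D"
proof -
  obtain C where C1: "\<forall>i\<in>{m..<m+k}. C i \<subseteq> X - P"
      and C2: "\<forall>i\<in>{m..<m+k}. \<forall>j\<in>{m..<m+k}. i \<noteq> j \<longrightarrow> C i \<inter> C j = {}"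
      and C3: "(\<Sum>i\<in>{m..<m+k}. f i (C i)) = OR_list (map f [m..<m+k]) (X - P)"
    using lemB[where f=f and k=k, rule_format, where m=m and S="X - P"] fX by auto
  define D where "D = C(p := X - (\<Union>i\<in>{m..<m+k}. C i))"
  have s: "(\<Sum>i\<in>{m..<m+k}. f i (D i)) = (\<Sum>i\<in>{m..<m+k}. f i (C i))"
    unfolding D_def using p by (intro sum.cong) auto
  have PD: "P \<subseteq> D p" "D p \<subseteq> X" using C1 P unfolding D_def by auto
  have mono: "f p P \<le> f p (D p)" using vp PD unfolding valuation_def by auto
  have al: "is_alloc X (insert p {m..<m+k}) D"
    unfolding is_alloc_def
  proof (intro conjI)
    show "\<forall>i\<in>insert p {m..<m + k}. D i \<subseteq> X" using C1 p unfolding D_def by auto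
    show "\<forall>i\<in>insert p {m..<m + k}. \<forall>j\<in>insert p {m..<m + k}. i \<noteq> j \<longrightarrow> D i \<inter> D j = {}"
      using C2 p unfolding D_def by auto
    show "(\<Union>i\<in>insert p {m..<m + k}. D i) = X" using C1 p unfolding D_def by auto
  qed
  have "welfare f (insert p {m..<m+k}) D = f p (D p) + (\<Sum>i\<in>{m..<m+k}. f i (D i))"
    unfolding welfare_def using p by simp
  then show ?thesis using al s C3 mono by (intro exI[of _ D]) auto
qed

theorem theorem12:
  fixes X :: "'a set" and us :: "nat \<Rightarrow> 'a valuation" and k :: nat
    and v v1 v2 :: "'a valuation" and A A' :: "nat \<Rightarrow> 'a set"
  assumes "finite X"
    and "1 \<le> k"
    and "\<forall>j<k. valuation X (us j)"
    and "valuation X v" and "valuation X v1" and "valuation X v2"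
    and "submodular X (OR_list (map us [0..<k]))"
    and "optimal_alloc X {..<k+2}
           (\<lambda>i. if i = 0 then v1 else if i = 1 then v2 else us (i - 2)) A"
    and "optimal_alloc X {..<k+1} (\<lambda>i. if i = 0 then v else us (i - 1)) A'"
  shows "v (A 0 \<union> A 1)
           - vcg_payment X {..<k+2} (\<lambda>i. if i = 0 then v1 else if i = 1 then v2 else us (i - 2)) A 0
           - vcg_payment X {..<k+2} (\<lambda>i. if i = 0 then v1 else if i = 1 then v2 else us (i - 2)) A 1
         \<le> v (A' 0) - vcg_payment X {..<k+1} (\<lambda>i. if i = 0 then v else us (i - 1)) A' 0"
proof -
  define w where "w = (\<lambda>i. if i = 0 then v1 else if i = 1 then v2 else us (i - 2))"
  define w' where "w' = (\<lambda>i. if i = 0 then v else us (i - 1))"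
  define U where "U = OR_list (map us [0..<k])"
  have fX: "finite X" by fact
  have e2: "[2..<2+k] = map (\<lambda>i. i+2) [0..<k]" by (metis map_add_upt add.commute)
  have e1: "[1..<1+k] = map (\<lambda>i. i+1) [0..<k]" by (metis map_add_upt add.commute)
  have hO2: "map w [2..<2+k] = map us [0..<k]" unfolding e2 w_def by (simp add: comp_def)
  have hO1: "map w' [1..<1+k] = map us [0..<k]" unfolding e1 w'_def by (simp add: comp_def)
  have alA: "is_alloc X {..<k+2} A" and optA: "\<forall>B. is_alloc X {..<k+2} B \<longrightarrow> welfare w {..<k+2} B \<le> welfare w {..<k+2} A"
    using assms(8) unfolding optimal_alloc_def w_def by auto
  have alA': "is_alloc X {..<k+1} A'" and optA': "\<forall>B. is_alloc X {..<k+1} B \<longrightarrow> welfare w' {..<k+1} B \<le> welfare w' {..<k+1} A'"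
    using assms(9) unfolding optimal_alloc_def w'_def by auto
  have A0: "A 0 \<subseteq> X" and A1: "A 1 \<subseteq> X" and A01: "A 0 \<inter> A 1 = {}"
    using alA unfolding is_alloc_def by auto
  define R where "R = X - A 0 - A 1"
  have Jeq: "{..<k+2} = {0,1} \<union> {2..<2+k}" by auto
  have alR: "is_alloc R {2..<2+k} A"
    unfolding is_alloc_def
  proof (intro conjI)
    show "\<forall>i\<in>{2..<2 + k}. A i \<subseteq> R"
    proof
      fix i assume i: "i \<in> {2..<2+k}"
      have "A i \<subseteq> X" "A i \<inter> A 0 = {}" "A i \<inter> A 1 = {}"
        using alA i unfolding is_alloc_def by auto
      then show "A i \<subseteq> R" unfolding R_def by auto
    qed
    show "\<forall>i\<in>{2..<2 + k}. \<forall>j\<in>{2..<2 + k}. i \<noteq> j \<longrightarrow> A i \<inter> A j = {}"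
      using alA unfolding is_alloc_def by auto
    have "X = A 0 \<union> A 1 \<union> (\<Union>i\<in>{2..<2+k}. A i)"
      using alA unfolding is_alloc_def Jeq by auto
    moreover have "\<forall>i\<in>{2..<2 + k}. A i \<subseteq> R" using \<open>\<forall>i\<in>{2..<2 + k}. A i \<subseteq> R\<close> .
    ultimately show "(\<Union>i\<in>{2..<2 + k}. A i) = R" unfolding R_def by auto
  qed
  define wo where "wo = (\<Sum>i\<in>{2..<2+k}. w i (A i))"
  have fR: "finite R" unfolding R_def using fX by simp
  have "wo \<le> OR_list (map w [2..<2+k]) R"
    using lemA[where f=w and k=k, rule_format, where m=2 and S=R and B=A] alR fR unfolding wo_def by simp
  then have woR: "wo \<le> U R" unfolding U_def hO2 .
  have J0: "{..<k+2} - {0} = insert 1 {2..<2+k}" by auto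
  have J1: "{..<k+2} - {1} = insert 0 {2..<2+k}" by auto
  have vw1: "valuation X (w 1)" "valuation X (w 0)" using assms(5,6) unfolding w_def by auto
  obtain D where D: "is_alloc X (insert 1 {2..<2+k}) D"
     "w 1 (A 1) + U (X - A 1) \<le> welfare w (insert 1 {2..<2+k}) D"
    using lemC[where f=w and p=1 and m=2 and k=k, OF fX _ vw1(1) A1] hO2 unfolding U_def by auto
  have opt0: "w 1 (A 1) + U (X - A 1) \<le> opt_welfare X ({..<k+2} - {0}) w"
    using opt_ge[OF fX _ D(1), of w] D(2) J0 by auto
  obtain D' where D': "is_alloc X (insert 0 {2..<2+k}) D'"
     "w 0 (A 0) + U (X - A 0) \<le> welfare w (insert 0 {2..<2+k}) D'"
    using lemC[where f=w and p=0 and m=2 and k=k, OF fX _ vw1(2) A0] hO2 unfolding U_def by auto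
  have opt1: "w 0 (A 0) + U (X - A 0) \<le> opt_welfare X ({..<k+2} - {1}) w"
    using opt_ge[OF fX _ D'(1), of w] D'(2) J1 by auto
  have wel0: "welfare w ({..<k+2} - {0}) A = w 1 (A 1) + wo"
    unfolding J0 welfare_def wo_def by simp
  have wel1: "welfare w ({..<k+2} - {1}) A = w 0 (A 0) + wo"
    unfolding J1 welfare_def wo_def by simp
  have sub: "U X + U R \<le> U (X - A 0) + U (X - A 1)"
  proof -
    have "(X - A 0) \<union> (X - A 1) = X" using A01 by auto
    moreover have "(X - A 0) \<inter> (X - A 1) = R" unfolding R_def by auto
    ultimately show ?thesis using assms(7) unfolding submodular_def U_def
      by (metis Diff_subset)
  qed
  have L: "v (A 0 \<union> A 1) - vcg_payment X {..<k+2} w A 0 - vcg_payment X {..<k+2} w A 1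
     \<le> v (A 0 \<union> A 1) - U X + U R"
    unfolding vcg_payment_def using wel0 wel1 opt0 opt1 woR sub by linarith
  have J'0: "{..<k+1} = insert 0 {1..<1+k}" by auto
  have J'1: "{..<k+1} - {0} = {1..<1+k}" by auto
  have vw': "valuation X (w' 0)" using assms(4) unfolding w'_def by auto
  have S12: "A 0 \<union> A 1 \<subseteq> X" using A0 A1 by auto
  obtain E where E: "is_alloc X (insert 0 {1..<1+k}) E"
     "w' 0 (A 0 \<union> A 1) + U (X - (A 0 \<union> A 1)) \<le> welfare w' (insert 0 {1..<1+k}) E"
    using lemC[where f=w' and p=0 and m=1 and k=k, OF fX _ vw' S12] hO1 unfolding U_def by auto
  have RR: "X - (A 0 \<union> A 1) = R" unfolding R_def by auto
  have wA': "welfare w' {..<k+1} A' = w' 0 (A' 0) + (\<Sum>i\<in>{1..<1+k}. w' i (A' i))"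
    unfolding J'0 welfare_def by simp
  have tr: "v (A 0 \<union> A 1) + U R \<le> v (A' 0) + (\<Sum>i\<in>{1..<1+k}. w' i (A' i))"
    using optA' E J'0 wA' RR unfolding w'_def by auto
  have F: "is_alloc X {1..<1+k} (\<lambda>i. if i = 1 then X else {})"
    using assms(2) unfolding is_alloc_def by auto
  obtain G where G: "is_alloc X {1..<1+k} G" "opt_welfare X {1..<1+k} w' = welfare w' {1..<1+k} G"
    using opt_in[OF fX _ F] by blast
  have "welfare w' {1..<1+k} G \<le> OR_list (map w' [1..<1+k]) X"
    using lemA[where f=w' and k=k, rule_format, where m=1 and S=X and B=G] G(1) fX unfolding welfare_def by simp
  then have "welfare w' {1..<1+k} G \<le> U X" unfolding U_def hO1 .
  then have optle: "opt_welfare X ({..<k+1} - {0}) w' \<le> U X" using G(2) J'1 by simp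
  have R: "v (A' 0) - vcg_payment X {..<k+1} w' A' 0 \<ge> v (A 0 \<union> A 1) - U X + U R"
    unfolding vcg_payment_def welfare_def J'1 using tr optle unfolding J'1 by linarith
  show ?thesis using L R unfolding w_def w'_def by linarith
qed

end
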